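(* Let $0<\beta\le1$. For every $\delta>0$ there exists an instance of $1\mid t_j\mid\sum C_j$ with obligatory tests on which $\beta$-SORT satisfies $\mathit{ALG}/\mathit{OPT}\ge\frac12\left(\sqrt{\frac{\beta+4}{\beta}}+1\right)-\delta$. In particular, the competitive ratio of $1$-SORT is at least the golden ratio $\frac{1+\sqrt5}{2}\approx1.618$.
   Context: Scheduling with obligatory tests: jobs $J=\{1,\dots,n\}$ on a single machine; job $j$ has a known test time $t_j\ge0$ and a processing time $p_j\ge0$ revealed only when its test has been executed. The test must be executed before the processing part (which may start any time later); operations are non-preemptive, one at a time. $C_j$ is the completion time of the processing part of $j$; objective $\sum_jC_j$. $\mathit{OPT}$ is the optimal offline objective value (all tests must also be executed); $\mathit{ALG}$ is the algorithm's value. Algorithm $\beta$-SORT (parameter $\beta>0$): maintain a priority queue of available operations, initially containing the test of every job $j$ with priority $\beta t_j$; repeatedly remove a minimum-priority operation and execute it immediately; after executing the test of $j$, insert the processing part of $j$ with priority $p_j$. *)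

theory Defs
  imports Complex_Main
begin

datatype operation = Test nat | Proc nat

definition valid_instance :: "nat \<Rightarrow> (nat \<Rightarrow> real) \<Rightarrow> (nat \<Rightarrow> real) \<Rightarrow> bool" where
  "valid_instance n t p \<longleftrightarrow> (\<forall>j<n. 0 \<le> t j \<and> 0 \<le> p j)"

definition ops :: "nat \<Rightarrow> operation set" where
  "ops n = {Test j | j. j < n} \<union> {Proc j | j. j < n}"

fun dur :: "(nat \<Rightarrow> real) \<Rightarrow> (nat \<Rightarrow> real) \<Rightarrow> operation \<Rightarrow> real" where
  "dur t p (Test j) = t j"
| "dur t p (Proc j) = p j"

fun is_proc :: "operation \<Rightarrow> bool" where
  "is_proc (Test j) = False"
| "is_proc (Proc j) = True"

definition feasible_schedule :: "nat \<Rightarrow> (nat \<Rightarrow> real) \<Rightarrow> (nat \<Rightarrow> real) \<Rightarrow> (operation \<Rightarrow> real) \<Rightarrow> bool" where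
  "feasible_schedule n t p S \<longleftrightarrow>
     (\<forall>a\<in>ops n. 0 \<le> S a) \<and>
     (\<forall>j<n. S (Test j) + t j \<le> S (Proc j)) \<and>
     (\<forall>a\<in>ops n. \<forall>b\<in>ops n. a \<noteq> b \<longrightarrow>
        S a + dur t p a \<le> S b \<or> S b + dur t p b \<le> S a)"

definition sched_cost :: "nat \<Rightarrow> (nat \<Rightarrow> real) \<Rightarrow> (operation \<Rightarrow> real) \<Rightarrow> real" where
  "sched_cost n p S = (\<Sum>j<n. S (Proc j) + p j)"

definition OPT :: "nat \<Rightarrow> (nat \<Rightarrow> real) \<Rightarrow> (nat \<Rightarrow> real) \<Rightarrow> real" where
  "OPT n t p = Inf {sched_cost n p S | S. feasible_schedule n t p S}"

fun prio :: "real \<Rightarrow> (nat \<Rightarrow> real) \<Rightarrow> (nat \<Rightarrow> real) \<Rightarrow> operation \<Rightarrow> real" where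
  "prio \<beta> t p (Test j) = \<beta> * t j"
| "prio \<beta> t p (Proc j) = p j"

definition avail :: "nat \<Rightarrow> operation list \<Rightarrow> operation set" where
  "avail n xs = {Test j | j. j < n \<and> Test j \<notin> set xs}
              \<union> {Proc j | j. j < n \<and> Test j \<in> set xs \<and> Proc j \<notin> set xs}"

text \<open>sigma is an execution order produced by beta-SORT (with some tie-breaking): at every
  step a minimum-priority available operation is executed.\<close>
definition sort_run :: "real \<Rightarrow> nat \<Rightarrow> (nat \<Rightarrow> real) \<Rightarrow> (nat \<Rightarrow> real) \<Rightarrow> operation list \<Rightarrow> bool" where
  "sort_run \<beta> n t p \<sigma> \<longleftrightarrow> length \<sigma> = 2 * n \<and>
     (\<forall>k < 2 * n. \<sigma> ! k \<in> avail n (take k \<sigma>) \<and>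
        (\<forall>b \<in> avail n (take k \<sigma>). prio \<beta> t p (\<sigma> ! k) \<le> prio \<beta> t p b))"

text \<open>Operations are executed immediately one after another starting at time 0, so the
  completion time of the k-th operation is the sum of durations of operations 0..k;
  ALG sums this over processing parts.\<close>
definition ALG :: "(nat \<Rightarrow> real) \<Rightarrow> (nat \<Rightarrow> real) \<Rightarrow> operation list \<Rightarrow> real" where
  "ALG t p \<sigma> = (\<Sum>k<length \<sigma>. if is_proc (\<sigma> ! k) then (\<Sum>i\<le>k. dur t p (\<sigma> ! i)) else 0)"

end

theory Submission
  imports Defs
begin


lemma sum_split_add: "sum f {..<(a::nat)+b} = sum f {..<a} + (\<Sum>i<b. f (a+i))"
  by (induction b) (auto simp: add.commute add.left_commute)

lemma gauss_real: "(\<Sum>i<n. real i + 1) = real n * (real n + 1) / 2"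
  by (induction n) (auto simp: field_simps)

lemma avail_mem:
  assumes "x \<in> avail n xs"
  shows "x \<notin> set xs \<and> (\<exists>j<n. x = Test j \<or> x = Proc j)"
  using assms unfolding avail_def by auto

lemma sort_distinct:
  assumes sr: "sort_run \<beta> n t p \<sigma>"
  shows "distinct \<sigma>"
proof -
  have len: "length \<sigma> = 2*n" and av: "\<And>k. k < 2*n \<Longrightarrow> \<sigma> ! k \<in> avail n (take k \<sigma>)"
    using sr unfolding sort_run_def by auto
  show ?thesis unfolding distinct_conv_nth
  proof (intro allI impI)
    fix i j assume i: "i < length \<sigma>" and j: "j < length \<sigma>" and ij: "i \<noteq> j"
    show "\<sigma> ! i \<noteq> \<sigma> ! j"
    proof (cases "i < j")
      case True
      have "\<sigma> ! i \<in> set (take j \<sigma>)" using True j by (auto simp: in_set_conv_nth intro!: exI[of _ i])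
      moreover have "\<sigma> ! j \<notin> set (take j \<sigma>)" using avail_mem[OF av] j len by auto
      ultimately show ?thesis by auto
    next
      case False
      then have "j < i" using ij by auto
      have "\<sigma> ! j \<in> set (take i \<sigma>)" using \<open>j < i\<close> i by (auto simp: in_set_conv_nth intro!: exI[of _ j])
      moreover have "\<sigma> ! i \<notin> set (take i \<sigma>)" using avail_mem[OF av] i len by auto
      ultimately show ?thesis by auto
    qed
  qed
qed

lemma sort_tests_first:
  assumes sr: "sort_run \<beta> n t p \<sigma>" and gap: "\<forall>j<n. \<forall>j'<n. \<beta> * t j < p j'"
    and k: "k < n"
  shows "\<exists>j<n. \<sigma> ! k = Test j"
proof -
  have av: "\<sigma> ! k \<in> avail n (take k \<sigma>)"
    and mn: "\<forall>b \<in> avail n (take k \<sigma>). prio \<beta> t p (\<sigma> ! k) \<le> prio \<beta> t p b"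
    using sr k unfolding sort_run_def by auto
  obtain j where j: "j < n" "\<sigma> ! k = Test j \<or> \<sigma> ! k = Proc j" using avail_mem[OF av] by auto
  have "\<exists>j'<n. Test j' \<notin> set (take k \<sigma>)"
  proof (rule ccontr)
    assume "\<not> ?thesis"
    then have "Test ` {..<n} \<subseteq> set (take k \<sigma>)" by auto
    then have "card (Test ` {..<n}) \<le> card (set (take k \<sigma>))" by (intro card_mono) auto
    also have "\<dots> \<le> length (take k \<sigma>)" by (rule card_length)
    also have "\<dots> \<le> k" by simp
    finally show False using k by (simp add: card_image inj_on_def)
  qed
  then obtain j' where j': "j' < n" "Test j' \<notin> set (take k \<sigma>)" by auto
  then have "Test j' \<in> avail n (take k \<sigma>)" unfolding avail_def by auto
  with mn have le: "prio \<beta> t p (\<sigma> ! k) \<le> \<beta> * t j'" by force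
  show ?thesis
  proof (cases "\<sigma> ! k = Test j")
    case True then show ?thesis using j by auto
  next
    case False
    then have "\<sigma> ! k = Proc j" using j by auto
    then have "p j \<le> \<beta> * t j'" using le by simp
    then show ?thesis using gap j j' by force
  qed
qed

lemma alg_eval:
  assumes sr: "sort_run \<beta> n t p \<sigma>" and gap: "\<forall>j<n. \<forall>j'<n. \<beta> * t j < p j'"
    and pq: "\<forall>j<n. p j = q"
  shows "ALG t p \<sigma> = real n * (\<Sum>j<n. t j) + q * (real n * (real n + 1) / 2)"
proof -
  have len: "length \<sigma> = 2*n" and av: "\<And>k. k < 2*n \<Longrightarrow> \<sigma> ! k \<in> avail n (take k \<sigma>)"
    using sr unfolding sort_run_def by auto
  have dist: "distinct \<sigma>" by (rule sort_distinct[OF sr])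
  have tests: "\<And>k. k < n \<Longrightarrow> \<exists>j<n. \<sigma> ! k = Test j" using sort_tests_first[OF sr gap] by blast
  have inj: "inj_on ((!) \<sigma>) {..<n}" using dist len by (auto simp: inj_on_def nth_eq_iff_index_eq)
  have img: "(!) \<sigma> ` {..<n} = Test ` {..<n}"
  proof (rule card_subset_eq)
    show "finite (Test ` {..<n})" by simp
    show "(!) \<sigma> ` {..<n} \<subseteq> Test ` {..<n}" using tests by blast
    show "card ((!) \<sigma> ` {..<n}) = card (Test ` {..<n})"
      using inj by (simp add: card_image inj_on_def)
  qed
  have procs: "\<And>k. n \<le> k \<Longrightarrow> k < 2*n \<Longrightarrow> \<exists>j<n. \<sigma> ! k = Proc j"
  proof -
    fix k assume k1: "n \<le> k" and k2: "k < 2*n"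
    obtain j where j: "j < n" "\<sigma> ! k = Test j \<or> \<sigma> ! k = Proc j" and nin: "\<sigma> ! k \<notin> set (take k \<sigma>)"
      using avail_mem[OF av[OF k2]] by auto
    show "\<exists>j<n. \<sigma> ! k = Proc j"
    proof (cases "\<sigma> ! k = Test j")
      case True
      then have "Test j \<in> (!) \<sigma> ` {..<n}" using img j by auto
      then obtain i where i: "i < n" "\<sigma> ! i = Test j" by auto
      then have "Test j \<in> set (take k \<sigma>)" using k1 k2 len
        by (auto simp: in_set_conv_nth intro!: exI[of _ i])
      then show ?thesis using True nin by simp
    next
      case False then show ?thesis using j by auto
    qed
  qed
  define T where "T = (\<Sum>i<n. dur t p (\<sigma> ! i))"
  have T: "T = (\<Sum>j<n. t j)"
  proof -
    have "T = sum (dur t p) ((!) \<sigma> ` {..<n})" unfolding T_def using sum.reindex[OF inj, of "dur t p"] by (simp add: comp_def)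
    also have "\<dots> = sum (dur t p) (Test ` {..<n})" using img by simp
    also have "\<dots> = (\<Sum>j<n. dur t p (Test j))" by (subst sum.reindex) (auto simp: inj_on_def)
    finally show ?thesis by simp
  qed
  have inner: "(\<Sum>l\<le>n+i. dur t p (\<sigma> ! l)) = T + (real i + 1) * q" if i: "i < n" for i
  proof -
    have "{..n+i} = {..<n + Suc i}" by auto
    then have "(\<Sum>l\<le>n+i. dur t p (\<sigma> ! l)) = T + (\<Sum>l<Suc i. dur t p (\<sigma> ! (n+l)))"
      unfolding T_def using sum_split_add by simp
    also have "(\<Sum>l<Suc i. dur t p (\<sigma> ! (n+l))) = (\<Sum>l<Suc i. q)"
    proof (rule sum.cong)
      fix l assume "l \<in> {..<Suc i}"
      then obtain j where "j < n" "\<sigma> ! (n+l) = Proc j" using procs[of "n+l"] i by auto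
      then show "dur t p (\<sigma> ! (n+l)) = q" using pq by simp
    qed simp
    finally show ?thesis by simp
  qed
  have "ALG t p \<sigma> = (\<Sum>k<n+n. if is_proc (\<sigma> ! k) then (\<Sum>i\<le>k. dur t p (\<sigma> ! i)) else 0)"
    unfolding ALG_def len by (simp add: mult_2)
  also have "\<dots> = (\<Sum>k<n. if is_proc (\<sigma> ! k) then (\<Sum>i\<le>k. dur t p (\<sigma> ! i)) else 0)
      + (\<Sum>i<n. if is_proc (\<sigma> ! (n+i)) then (\<Sum>l\<le>n+i. dur t p (\<sigma> ! l)) else 0)"
    by (rule sum_split_add)
  also have "(\<Sum>k<n. if is_proc (\<sigma> ! k) then (\<Sum>i\<le>k. dur t p (\<sigma> ! i)) else 0) = 0"
    by (rule sum.neutral) (use tests in force)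
  also have "(\<Sum>i<n. if is_proc (\<sigma> ! (n+i)) then (\<Sum>l\<le>n+i. dur t p (\<sigma> ! l)) else 0)
      = (\<Sum>i<n. T + (real i + 1) * q)"
  proof (rule sum.cong)
    fix i assume i: "i \<in> {..<n}"
    then obtain j where "\<sigma> ! (n+i) = Proc j" using procs[of "n+i"] by auto
    then show "(if is_proc (\<sigma> ! (n+i)) then (\<Sum>l\<le>n+i. dur t p (\<sigma> ! l)) else 0) = T + (real i + 1) * q"
      using inner i by simp
  qed simp
  also have "(\<Sum>i<n. T + (real i + 1) * q) = real n * T + q * (\<Sum>i<n. real i + 1)"
    by (simp add: sum.distrib sum_distrib_left[symmetric] mult.commute)
  finally show ?thesis using T gauss_real by simp
qed



lemma OPT_le:
  assumes fs: "feasible_schedule n t p S0" and pn: "\<forall>j<n. 0 \<le> p j"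
  shows "OPT n t p \<le> sched_cost n p S0" and "(\<Sum>j<n. p j) \<le> OPT n t p"
proof -
  have lb: "(\<Sum>j<n. p j) \<le> sched_cost n p S" if "feasible_schedule n t p S" for S
  proof -
    have "\<And>j. j < n \<Longrightarrow> 0 \<le> S (Proc j)" using that unfolding feasible_schedule_def ops_def by auto
    then show ?thesis unfolding sched_cost_def by (intro sum_mono) auto
  qed
  have bdd: "bdd_below {sched_cost n p S | S. feasible_schedule n t p S}"
    using lb by (auto simp: bdd_below_def)
  show "OPT n t p \<le> sched_cost n p S0" unfolding OPT_def
    by (rule cInf_lower) (use fs bdd in auto)
  show "(\<Sum>j<n. p j) \<le> OPT n t p" unfolding OPT_def
    by (rule cInf_greatest) (use fs lb in auto)
qed

definition tI :: "nat \<Rightarrow> nat \<Rightarrow> real" where "tI N j = (if j < N then 1 else 0)"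

definition SI :: "nat \<Rightarrow> nat \<Rightarrow> real \<Rightarrow> operation \<Rightarrow> real" where
  "SI N M q a = (case a of
      Test j \<Rightarrow> (if j < N then real M * q + real j * (1+q) else real (j-N) * q)
    | Proc j \<Rightarrow> (if j < N then real M * q + real j * (1+q) + 1 else real (j-N) * q))"

definition loI :: "nat \<Rightarrow> nat \<Rightarrow> real \<Rightarrow> nat \<Rightarrow> real" where
  "loI N M q j = (if j < N then real M * q + real j * (1+q) else real (j-N) * q)"
definition hiI :: "nat \<Rightarrow> nat \<Rightarrow> real \<Rightarrow> nat \<Rightarrow> real" where
  "hiI N M q j = (if j < N then real M * q + (real j + 1) * (1+q) else (real (j-N) + 1) * q)"

fun job :: "operation \<Rightarrow> nat" where "job (Test j) = j" | "job (Proc j) = j"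

lemma blocks_disj:
  assumes q: "0 \<le> q" and j: "j < N + M" and j': "j' < N + M" and ne: "j \<noteq> j'"
  shows "hiI N M q j \<le> loI N M q j' \<or> hiI N M q j' \<le> loI N M q j"
proof -
  have A: "hiI N M q a \<le> loI N M q b" if "a < b" "b < N" for a b
  proof -
    have "(real a + 1) * (1+q) \<le> real b * (1+q)" using that q by (intro mult_right_mono) auto
    then show ?thesis using that unfolding hiI_def loI_def by simp
  qed
  have B: "hiI N M q a \<le> loI N M q b" if "a < b" "N \<le> a" "b < N + M" for a b
  proof -
    have "real (a - N) + 1 \<le> real (b - N)" using that by auto
    then have "(real (a - N) + 1) * q \<le> real (b - N) * q" using q by (intro mult_right_mono) auto
    then show ?thesis using that unfolding hiI_def loI_def by simp
  qed
  have C: "hiI N M q a \<le> loI N M q b" if "N \<le> a" "a < N + M" "b < N" for a b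
  proof -
    have "real (a - N) + 1 \<le> real M" using that by auto
    then have "(real (a - N) + 1) * q \<le> real M * q" using q by (intro mult_right_mono) auto
    moreover have "0 \<le> real b * (1 + q)" using q by simp
    ultimately show ?thesis using that unfolding hiI_def loI_def by simp
  qed
  show ?thesis
  proof (cases "j < j'")
    case True
    then show ?thesis using A B C j j' by (cases "j' < N"; cases "j < N") auto
  next
    case False then have "j' < j" using ne by auto
    then show ?thesis using A B C j j' by (cases "j' < N"; cases "j < N") auto
  qed
qed

lemma op_in_block:
  assumes q: "0 \<le> q" and a: "a \<in> ops (N+M)"
  shows "loI N M q (job a) \<le> SI N M q a \<and> SI N M q a + dur (tI N) (\<lambda>_. q) a \<le> hiI N M q (job a)"
  using a q unfolding ops_def by (auto simp: SI_def loI_def hiI_def tI_def algebra_simps)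

lemma SI_feasible:
  assumes q: "0 \<le> q"
  shows "feasible_schedule (N+M) (tI N) (\<lambda>_. q) (SI N M q)"
  unfolding feasible_schedule_def
proof (intro conjI ballI allI impI)
  fix a assume "a \<in> ops (N+M)" then show "0 \<le> SI N M q a"
    using q unfolding ops_def by (auto simp: SI_def)
next
  fix j assume "j < N + M" then show "SI N M q (Test j) + tI N j \<le> SI N M q (Proc j)"
    by (auto simp: SI_def tI_def)
next
  fix a b assume a: "a \<in> ops (N+M)" and b: "b \<in> ops (N+M)" and ne: "a \<noteq> b"
  show "SI N M q a + dur (tI N) (\<lambda>_. q) a \<le> SI N M q b \<or> SI N M q b + dur (tI N) (\<lambda>_. q) b \<le> SI N M q a"
  proof (cases "job a = job b")
    case False
    have ja: "job a < N + M" using a unfolding ops_def by auto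
    have jb: "job b < N + M" using b unfolding ops_def by auto
    from blocks_disj[OF q ja jb False] op_in_block[OF q a] op_in_block[OF q b] show ?thesis by auto
  next
    case True
    then obtain j where "a = Test j \<and> b = Proc j \<or> a = Proc j \<and> b = Test j"
      using ne by (cases a; cases b) auto
    then show ?thesis by (auto simp: SI_def tI_def)
  qed
qed

lemma SI_cost:
  "sched_cost (N+M) (\<lambda>_. q) (SI N M q)
     = real N * real M * q + (1+q) * (real N * (real N + 1) / 2) + q * (real M * (real M + 1) / 2)"
proof -
  have "sched_cost (N+M) (\<lambda>_. q) (SI N M q) = (\<Sum>j<N. SI N M q (Proc j) + q) + (\<Sum>i<M. SI N M q (Proc (N+i)) + q)"
    unfolding sched_cost_def by (rule sum_split_add)
  also have "(\<Sum>j<N. SI N M q (Proc j) + q) = (\<Sum>j<N. real M * q + (1+q) * (real j + 1))"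
    by (rule sum.cong) (auto simp: SI_def algebra_simps)
  also have "\<dots> = real N * real M * q + (1+q) * (\<Sum>j<N. real j + 1)"
    by (simp add: sum.distrib sum_distrib_left[symmetric])
  also have "(\<Sum>i<M. SI N M q (Proc (N+i)) + q) = (\<Sum>i<M. q * (real i + 1))"
    by (rule sum.cong) (auto simp: SI_def algebra_simps)
  also have "\<dots> = q * (\<Sum>i<M. real i + 1)" by (simp add: sum_distrib_left)
  finally show ?thesis by (simp only: gauss_real)
qed



lemma final_alg:
  fixes \<beta> s \<delta> N M K q A Ob :: real
  assumes b0: "0 < \<beta>" and b1: "\<beta> \<le> 1" and d0: "0 < \<delta>"
    and key: "\<beta> * s^2 = \<beta> * s + 1" and s1: "1 \<le> s"
    and N1: "1 \<le> N" and Nd: "(1 + s + 3*s^2) / \<delta> \<le> N"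
    and M0: "0 \<le> M" and Mu: "M \<le> (s-1)*N" and Ml: "(s-1)*N - 1 < M"
    and K: "K = N + M" and q: "q = \<beta> + 1 / K^2"
    and A: "A = K*N + q*(K*(K+1)/2)"
    and Ob: "Ob = N*M*q + (1+q)*(N*(N+1)/2) + q*(M*(M+1)/2)"
  shows "(s-\<delta>)*Ob \<le> A"
proof -
  define A0 where "A0 = N*K + \<beta>*K^2/2"
  define O0 where "O0 = (\<beta>*K^2 + N^2)/2"
  have Kpos: "1 \<le> K" using K N1 M0 by simp
  have qb: "\<beta> \<le> q" using q by simp
  have q2: "q \<le> 2"
  proof -
    have "1/K^2 \<le> 1" using Kpos by (simp add: field_simps one_le_power)
    then show ?thesis using q b1 by simp
  qed
  have q0: "0 \<le> q" using qb b0 by simp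
  have qK: "q*K^2 = \<beta>*K^2 + 1" using q Kpos by (simp add: field_simps)
  have A0A: "A0 \<le> A"
  proof -
    have "\<beta>*K^2/2 \<le> q*(K*(K+1)/2)"
    proof -
      have "\<beta>*K^2 \<le> q*K^2" using qb by (intro mult_right_mono) auto
      also have "\<dots> \<le> q*(K*(K+1))" using q0 Kpos by (intro mult_left_mono) (auto simp: power2_eq_square algebra_simps)
      finally show ?thesis by simp
    qed
    then show ?thesis unfolding A0_def A by (simp add: mult.commute)
  qed
  have ObO0: "Ob \<le> O0 + 1/2 + 3*K/2"
  proof -
    have "2*Ob = q*K^2 + N^2 + q*M + (1+q)*N" unfolding Ob K by (simp add: field_simps power2_eq_square)
    also have "\<dots> \<le> q*K^2 + N^2 + 3*M + 3*N"
      using q2 M0 N1 by (intro add_mono mult_right_mono) auto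
    finally have "2*Ob \<le> \<beta>*K^2 + 1 + N^2 + 3*K" using qK K by simp
    then show ?thesis unfolding O0_def by (simp add: field_simps)
  qed
  have ss: "s*(s-1)*\<beta> = 1" using key by (simp add: algebra_simps power2_eq_square)
  have ident: "A0 - s*O0 = -((s-1)*\<beta>*(K - s*N)^2)/2"
  proof -
    have e: "(s-1)*\<beta>*(K - s*N)^2 = (s-1)*\<beta>*K^2 - 2*(s*(s-1)*\<beta>)*N*K + s*(s*(s-1)*\<beta>)*N^2"
      by (simp add: algebra_simps power2_eq_square)
    show ?thesis unfolding A0_def O0_def e ss by (simp add: algebra_simps)
  qed
  have sb: "(s-1)*\<beta> \<le> 1"
  proof -
    have nn: "0 \<le> (s-1)*\<beta>" using s1 b0 by simp
    have "1*((s-1)*\<beta>) \<le> s*((s-1)*\<beta>)" using s1 nn by (rule mult_right_mono)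
    then show ?thesis using ss by (simp add: mult.assoc)
  qed
  have sq: "(K - s*N)^2 \<le> 1"
  proof -
    have "\<bar>K - s*N\<bar> \<le> 1" using K Mu Ml by (simp add: algebra_simps abs_le_iff)
    then have "\<bar>K - s*N\<bar>^2 \<le> 1^2" by (intro power_mono) auto
    then show ?thesis by simp
  qed
  have sbn: "0 \<le> (s-1)*\<beta>" using s1 b0 by simp
  have "(s-1)*\<beta>*(K - s*N)^2 \<le> 1*1" using sb sq sbn by (intro mult_mono) auto
  then have core: "s*O0 - 1/2 \<le> A0" using ident by simp
  have O0pos: "N^2/2 \<le> O0" unfolding O0_def using b0 by simp
  have Opos: "0 \<le> Ob" unfolding Ob using q0 M0 N1 by simp
  have Apos: "0 \<le> A0" unfolding A0_def using Kpos N1 b0 by simp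
  show ?thesis
  proof (cases "s - \<delta> \<le> 0")
    case True
    then have "(s-\<delta>)*Ob \<le> 0" using Opos by (simp add: mult_nonpos_nonneg)
    then show ?thesis using Apos A0A by simp
  next
    case False
    have KsN: "K \<le> s*N" using K Mu by (simp add: algebra_simps)
    have dN: "1 + s + 3*s^2 \<le> \<delta>*N" using Nd d0 by (simp add: field_simps)
    have "(1 + s + 3*s^2)*N \<le> \<delta>*N*N" using dN N1 by (intro mult_right_mono) auto
    moreover have "1 + s + 3*s^2*N \<le> (1 + s + 3*s^2)*N"
    proof -
      have "(1+s) \<le> (1+s)*N" using mult_left_mono[of 1 N "1+s"] N1 s1 by simp
      moreover have "(1 + s + 3*s^2)*N = (1+s)*N + 3*s^2*N" by (simp add: distrib_right)
      ultimately show ?thesis by linarith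
    qed
    moreover have "s*(1+3*K) \<le> s + 3*s^2*N"
    proof -
      have "s*K \<le> s*(s*N)" using KsN s1 by (intro mult_left_mono) auto
      then show ?thesis by (simp add: distrib_left power2_eq_square algebra_simps)
    qed
    ultimately have big: "1 + s*(1+3*K) \<le> \<delta>*N^2" by (simp add: power2_eq_square)
    have "(s-\<delta>)*Ob \<le> (s-\<delta>)*(O0 + 1/2 + 3*K/2)" using False ObO0 by (intro mult_left_mono) auto
    also have "\<dots> = s*O0 - \<delta>*O0 + (s-\<delta>)*(1+3*K)/2" by (simp add: field_simps)
    also have "\<dots> \<le> s*O0 - \<delta>*(N^2/2) + s*(1+3*K)/2"
      using O0pos d0 Kpos by (intro add_mono diff_mono) (auto intro: mult_left_mono)
    also have "\<dots> \<le> s*O0 - 1/2" using big by simp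
    also have "\<dots> \<le> A" using core A0A by simp
    finally show ?thesis .
  qed
qed


lemma sum_tI: "(\<Sum>j<N+M. tI N j) = real N"
  using sum_split_add[of "tI N" N M] by (simp add: tI_def)

lemma part1:
  fixes \<beta> \<delta> :: real
  assumes b0: "0 < \<beta>" and b1: "\<beta> \<le> 1" and d0: "0 < \<delta>"
  shows "\<exists>n t p. valid_instance n t p \<and> 0 < OPT n t p \<and>
               (\<forall>\<sigma>. sort_run \<beta> n t p \<sigma> \<longrightarrow>
                  ALG t p \<sigma> / OPT n t p \<ge> (sqrt ((\<beta> + 4) / \<beta>) + 1) / 2 - \<delta>)"
proof -
  define w where "w = sqrt ((\<beta> + 4) / \<beta>)"
  define s where "s = (w + 1) / 2"
  have w2: "w^2 = (\<beta> + 4) / \<beta>" unfolding w_def using b0 by simp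
  have bw: "\<beta> * w^2 = \<beta> + 4" using w2 b0 by simp
  have key: "\<beta> * s^2 = \<beta> * s + 1"
  proof -
    have "4 * (\<beta> * s^2) = \<beta> * w^2 + 2*\<beta>*w + \<beta>" unfolding s_def by (simp add: power2_eq_square algebra_simps)
    also have "\<dots> = 4 * (\<beta> * s + 1)" unfolding bw s_def by (simp add: algebra_simps)
    finally show ?thesis by simp
  qed
  have w1: "1 \<le> w" unfolding w_def using b0 by (simp add: field_simps)
  have s1: "1 \<le> s" unfolding s_def using w1 by simp
  define N :: nat where "N = nat \<lceil>(1 + s + 3*s^2) / \<delta>\<rceil> + 1"
  have N1: "1 \<le> real N" unfolding N_def by simp
  have Nd: "(1 + s + 3*s^2) / \<delta> \<le> real N" unfolding N_def
    by (metis of_nat_add real_nat_ceiling_ge add_increasing2 zero_le_one of_nat_0_le_iff)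
  define M :: nat where "M = nat \<lfloor>(s-1) * real N\<rfloor>"
  have sN0: "0 \<le> (s-1) * real N" using s1 by simp
  have Mr: "real M = of_int \<lfloor>(s-1) * real N\<rfloor>" unfolding M_def using sN0 by simp
  have Mu: "real M \<le> (s-1) * real N" using Mr by simp
  have Ml: "(s-1) * real N - 1 < real M" using Mr by linarith
  define K :: nat where "K = N + M"
  define q where "q = \<beta> + 1 / (real K)^2"
  have Kpos: "0 < real K" unfolding K_def using N1 by simp
  have qgt: "\<beta> < q" unfolding q_def using Kpos by simp
  have q0: "0 \<le> q" using qgt b0 by simp
  define t where "t = tI N"
  define p :: "nat \<Rightarrow> real" where "p = (\<lambda>_. q)"
  have valid: "valid_instance K t p" unfolding valid_instance_def t_def p_def tI_def using q0 by simp
  have feas: "feasible_schedule K t p (SI N M q)" unfolding K_def t_def p_def by (rule SI_feasible[OF q0])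
  have pn: "\<forall>j<K. 0 \<le> p j" unfolding p_def using q0 by simp
  define Ob where "Ob = real N * real M * q + (1+q) * (real N * (real N + 1) / 2) + q * (real M * (real M + 1) / 2)"
  have OPTub: "OPT K t p \<le> Ob" using OPT_le(1)[OF feas pn] SI_cost[of N M q]
    unfolding Ob_def K_def p_def by simp
  have OPTlb: "real K * q \<le> OPT K t p" using OPT_le(2)[OF feas pn] unfolding p_def by simp
  have OPTpos: "0 < OPT K t p" using OPTlb Kpos qgt b0
    by (smt (verit) mult_pos_pos)
  have gap: "\<forall>j<K. \<forall>j'<K. \<beta> * t j < p j'" unfolding t_def p_def tI_def using qgt b0 by auto
  define A where "A = real K * real N + q * (real K * (real K + 1) / 2)"
  have Aeq: "ALG t p \<sigma> = A" if "sort_run \<beta> K t p \<sigma>" for \<sigma>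
  proof -
    have "ALG t p \<sigma> = real K * (\<Sum>j<K. t j) + q * (real K * (real K + 1) / 2)"
      by (rule alg_eval[OF that gap]) (simp add: p_def)
    also have "(\<Sum>j<K. t j) = real N" unfolding K_def t_def by (rule sum_tI)
    finally show ?thesis unfolding A_def by (simp add: mult.commute)
  qed
  have fin: "(s-\<delta>)*Ob \<le> A"
    by (rule final_alg[OF b0 b1 d0 key s1 N1 Nd _ Mu Ml _ q_def[unfolded K_def of_nat_add] _ Ob_def])
       (auto simp: A_def K_def)
  have A0: "0 \<le> A" unfolding A_def using q0 by simp
  have ratio: "s - \<delta> \<le> A / OPT K t p"
  proof (cases "s - \<delta> \<le> 0")
    case True then show ?thesis using A0 OPTpos by (smt (verit) divide_nonneg_pos)
  next
    case False
    have Obpos: "0 < Ob" using OPTpos OPTub by simp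
    have "s - \<delta> \<le> A / Ob" using fin Obpos by (simp add: pos_le_divide_eq)
    also have "A / Ob \<le> A / OPT K t p" using A0 OPTpos OPTub by (intro divide_left_mono) auto
    finally show ?thesis .
  qed
  show ?thesis
    apply (rule exI[of _ K], rule exI[of _ t], rule exI[of _ p])
    using valid OPTpos ratio Aeq unfolding s_def w_def by auto
qed

theorem mainTheorem12:
  shows "(\<forall>\<beta> \<delta> :: real. 0 < \<beta> \<and> \<beta> \<le> 1 \<and> 0 < \<delta> \<longrightarrow>
            (\<exists>n t p. valid_instance n t p \<and> 0 < OPT n t p \<and>
               (\<forall>\<sigma>. sort_run \<beta> n t p \<sigma> \<longrightarrow>
                  ALG t p \<sigma> / OPT n t p \<ge> (sqrt ((\<beta> + 4) / \<beta>) + 1) / 2 - \<delta>)))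
       \<and> (\<forall>c :: real. c < (1 + sqrt 5) / 2 \<longrightarrow>
            (\<exists>n t p. valid_instance n t p \<and> 0 < OPT n t p \<and>
               (\<forall>\<sigma>. sort_run 1 n t p \<sigma> \<longrightarrow> ALG t p \<sigma> / OPT n t p > c)))"
proof
  show "\<forall>\<beta> \<delta> :: real. 0 < \<beta> \<and> \<beta> \<le> 1 \<and> 0 < \<delta> \<longrightarrow>
            (\<exists>n t p. valid_instance n t p \<and> 0 < OPT n t p \<and>
               (\<forall>\<sigma>. sort_run \<beta> n t p \<sigma> \<longrightarrow>
                  ALG t p \<sigma> / OPT n t p \<ge> (sqrt ((\<beta> + 4) / \<beta>) + 1) / 2 - \<delta>))"
    using part1 by blast
  show "\<forall>c :: real. c < (1 + sqrt 5) / 2 \<longrightarrow>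
            (\<exists>n t p. valid_instance n t p \<and> 0 < OPT n t p \<and>
               (\<forall>\<sigma>. sort_run 1 n t p \<sigma> \<longrightarrow> ALG t p \<sigma> / OPT n t p > c))"
  proof (intro allI impI)
    fix c :: real assume c: "c < (1 + sqrt 5) / 2"
    define \<delta> where "\<delta> = ((1 + sqrt 5) / 2 - c) / 2"
    have d0: "0 < \<delta>" unfolding \<delta>_def using c by simp
    obtain n t p where h: "valid_instance n t p" "0 < OPT n t p"
      "\<forall>\<sigma>. sort_run 1 n t p \<sigma> \<longrightarrow> ALG t p \<sigma> / OPT n t p \<ge> (sqrt ((1 + 4) / 1) + 1) / 2 - \<delta>"
      using part1[of 1 \<delta>] d0 by auto
    have "(sqrt ((1 + 4) / 1) + 1) / 2 - \<delta> > c" unfolding \<delta>_def using c by (simp add: field_simps)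
    then show "\<exists>n t p. valid_instance n t p \<and> 0 < OPT n t p \<and>
               (\<forall>\<sigma>. sort_run 1 n t p \<sigma> \<longrightarrow> ALG t p \<sigma> / OPT n t p > c)"
      using h by (meson less_le_trans)
  qed
qed

end
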